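(* Let $G$ be a game state and let $P$ be a game path starting at $G$ that follows the Split-First Strategy. Let $m$ be any move that the Split-First Strategy permits at $G$. Then there exists a game path $P'$ starting at $G$ whose first move is $m$, which follows the Split-First Strategy, and which has the same length as $P$.
   Context: Fibonacci numbers are indexed by $F_1=1$, $F_2=2$, $F_{i+1}=F_i+F_{i-1}$. A game state is a finite multiset of Fibonacci numbers (tracked by index). The legal moves are: $C_1$: replace $F_1,F_1$ by $F_2$; for $i\ge 2$, $C_i$: replace $F_{i-1},F_i$ by $F_{i+1}$ (a "combining move"); $S_2$: replace $F_2,F_2$ by $F_1,F_3$; for $i\ge 3$, $S_i$: replace $F_i,F_i$ by $F_{i-2},F_{i+1}$ (a "splitting move"). Here $C_1$ is grouped with the splitting moves, and "combining move" means $C_i$ with $i\ge 2$. Every sequence of legal moves is finite. A game path from a state $G$ is a sequence of legal moves starting at $G$ and continuing until no legal move is available; its length is its number of moves. A game path follows the Split-First Strategy if at each state along it: whenever some splitting move or $C_1$ is available, the move taken is one of those (any choice); otherwise the move taken is the combining move $C_i$ ($i\ge 2$) with the smallest index $i$ among those available. *)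

theory Defs
  imports Main "HOL-Library.Multiset"
begin

(* A game state is a finite multiset of Fibonacci indices (index i stands for F_i, i >= 1). *)

datatype move = Comb nat | Split nat
(* Comb 1 = C_1;  Comb i (i >= 2) = C_i;  Split i (i >= 2) = S_i.
   Comb 0, Split 0, Split 1 are never legal. *)

fun legal :: "nat multiset \<Rightarrow> move \<Rightarrow> bool" where
  "legal G (Comb i) =
     (if i = 0 then False
      else if i = 1 then count G 1 \<ge> 2
      else (i - 1) \<in># G \<and> i \<in># G)"
| "legal G (Split i) = (i \<ge> 2 \<and> count G i \<ge> 2)"

fun step :: "nat multiset \<Rightarrow> move \<Rightarrow> nat multiset" where
  "step G (Comb i) =
     (if i = 1 then G - {#1, 1#} + {#2#}
      else G - {#i - 1, i#} + {#i + 1#})"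
| "step G (Split i) =
     (if i = 2 then G - {#2, 2#} + {#1, 3#}
      else G - {#i, i#} + {#i - 2, i + 1#})"

definition terminal :: "nat multiset \<Rightarrow> bool" where
  "terminal G \<longleftrightarrow> (\<nexists>m. legal G m)"

definition splitlike :: "move \<Rightarrow> bool" where
  "splitlike m \<longleftrightarrow> m = Comb 1 \<or> (\<exists>i. m = Split i)"

fun game_path :: "nat multiset \<Rightarrow> move list \<Rightarrow> bool" where
  "game_path G [] = terminal G"
| "game_path G (m # ms) = (legal G m \<and> game_path (step G m) ms)"

definition sf_move :: "nat multiset \<Rightarrow> move \<Rightarrow> bool" where
  "sf_move G m \<longleftrightarrow> legal G m \<and>
     (if \<exists>m'. legal G m' \<and> splitlike m' then splitlike m
      else (\<exists>i. i \<ge> 2 \<and> m = Comb i \<and> (\<forall>j. 2 \<le> j \<and> j < i \<longrightarrow> \<not> legal G (Comb j))))"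

fun follows_sf :: "nat multiset \<Rightarrow> move list \<Rightarrow> bool" where
  "follows_sf G [] = True"
| "follows_sf G (m # ms) = (sf_move G m \<and> follows_sf (step G m) ms)"

end

theory Submission
  imports Defs
begin

lemma swap:
  assumes "a \<noteq> b" "count G a \<ge> 2" "count G b \<ge> 2"
  shows "G - {#a,a#} + A - {#b,b#} + B = G - {#b,b#} + B - {#a,a#} + A"
  unfolding multiset_eq_iff
proof
  fix x show "count (G - {#a,a#} + A - {#b,b#} + B) x = count (G - {#b,b#} + B - {#a,a#} + A) x"
    using assms by (cases "x = a"; cases "x = b"; simp)
qed

lemma keep:
  assumes "a \<noteq> b"
  shows "count (G - {#a,a#} + A) b \<ge> count G b"
  using assms by simp

definition key :: "move \<Rightarrow> nat" where
  "key mv = (case mv of Comb k \<Rightarrow> k | Split k \<Rightarrow> k)"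
definition addm :: "move \<Rightarrow> nat multiset" where
  "addm mv = (case mv of Comb k \<Rightarrow> {#2#} | Split k \<Rightarrow> (if k = 2 then {#1,3#} else {#k-2,k+1#}))"

lemma step_form: "splitlike mv \<Longrightarrow> step G mv = G - {#key mv, key mv#} + addm mv"
  by (auto simp: splitlike_def key_def addm_def)

lemma legal_form: "splitlike mv \<Longrightarrow> legal G mv \<longleftrightarrow> (key mv \<ge> 2 \<or> mv = Comb 1) \<and> count G (key mv) \<ge> 2"
  by (auto simp: splitlike_def key_def)

lemma key_inj: "splitlike m \<Longrightarrow> splitlike m0 \<Longrightarrow> legal G m \<Longrightarrow> legal G m0 \<Longrightarrow> m \<noteq> m0 \<Longrightarrow> key m \<noteq> key m0"
  by (auto simp: splitlike_def key_def)

lemma commute: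
  assumes "splitlike m" "splitlike m0" "m \<noteq> m0" "legal G m" "legal G m0"
  shows "legal (step G m0) m \<and> step (step G m0) m = step (step G m) m0"
proof -
  have k: "key m \<noteq> key m0" using key_inj assms by blast
  have c1: "count G (key m) \<ge> 2" "count G (key m0) \<ge> 2" using assms legal_form by auto
  have "legal (step G m0) m"
    using assms k c1 keep[of "key m0" "key m" G "addm m0"]
    by (simp add: step_form legal_form)
  moreover have "step (step G m0) m = step (step G m) m0"
    using assms k c1 by (simp add: step_form swap)
  ultimately show ?thesis by simp
qed

lemma sf_both_split:
  assumes "sf_move G m" "sf_move G m0" "m \<noteq> m0"
  shows "splitlike m \<and> splitlike m0"
proof (cases "\<exists>m'. legal G m' \<and> splitlike m'")
  case True then show ?thesis using assms by (simp add: sf_move_def)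
next
  case False
  then obtain i j where i: "i \<ge> 2" "m = Comb i" "\<forall>j. 2 \<le> j \<and> j < i \<longrightarrow> \<not> legal G (Comb j)"
    and j: "j \<ge> 2" "m0 = Comb j" "\<forall>k. 2 \<le> k \<and> k < j \<longrightarrow> \<not> legal G (Comb k)"
  proof -
    have a: "\<exists>i\<ge>2. m = Comb i \<and> (\<forall>j. 2 \<le> j \<and> j < i \<longrightarrow> \<not> legal G (Comb j))"
      using assms(1) False unfolding sf_move_def by presburger
    have b: "\<exists>i\<ge>2. m0 = Comb i \<and> (\<forall>j. 2 \<le> j \<and> j < i \<longrightarrow> \<not> legal G (Comb j))"
      using assms(2) False unfolding sf_move_def by presburger
    show ?thesis using a b that by blast
  qed
  have "legal G m" "legal G m0" using assms by (auto simp: sf_move_def)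
  hence "\<not> i < j" "\<not> j < i" using i j by auto
  hence "i = j" by simp
  thus ?thesis using i j assms(3) by simp
qed

theorem lemma2p1:
  fixes G :: "nat multiset" and P :: "move list" and m :: move
  assumes "\<forall>x\<in>#G. 1 \<le> x"
    and "game_path G P" and "follows_sf G P"
    and "sf_move G m"
  shows "\<exists>P'. game_path G P' \<and> follows_sf G P' \<and> P' \<noteq> [] \<and> hd P' = m
              \<and> length P' = length P"
  using assms(2-4)
proof (induction P arbitrary: G m)
  case Nil
  then show ?case by (auto simp: terminal_def sf_move_def)
next
  case (Cons m0 P1)
  show ?case
  proof (cases "m0 = m")
    case True then show ?thesis using Cons.prems by (intro exI[of _ "m0 # P1"]) auto
  next
    case False
    have sf0: "sf_move G m0" using Cons.prems by simp
    have sl: "splitlike m" "splitlike m0" using sf_both_split[OF Cons.prems(3) sf0] False by auto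
    have lg: "legal G m" "legal G m0" using sf0 Cons.prems(3) by (auto simp: sf_move_def)
    note cm = commute[OF sl(1) sl(2) _ lg] 
    have cm': "legal (step G m0) m" "step (step G m0) m = step (step G m) m0" using cm False by auto
    have "sf_move (step G m0) m" using cm'(1) sl(1) by (auto simp: sf_move_def)
    moreover have "game_path (step G m0) P1" "follows_sf (step G m0) P1" using Cons.prems by auto
    ultimately obtain P1' where P1': "game_path (step G m0) P1'" "follows_sf (step G m0) P1'"
      "P1' \<noteq> []" "hd P1' = m" "length P1' = length P1"
      using Cons.IH by blast
    then obtain P2 where P2: "P1' = m # P2" by (cases P1') auto
    have gp2: "game_path (step (step G m) m0) P2" "follows_sf (step (step G m) m0) P2"
      using P1' P2 cm'(2) by auto
    have lg2: "legal (step G m) m0" using commute[OF sl(2) sl(1) _ lg(2) lg(1)] False by auto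
    have sf2: "sf_move (step G m) m0" using lg2 sl(2) by (auto simp: sf_move_def)
    show ?thesis
      apply (intro exI[of _ "m # m0 # P2"])
      using gp2 lg2 sf2 lg Cons.prems(3) P1' P2 by auto
  qed
qed
end
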